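(* Let $Z'$ be a Markov chain with transition matrix $\mathbf P_{Z'}$ on a finite state space $\mathbb E'=\{-\infty\}\cup\mathbb E$, $\mathbb E=\{\mathbf e_1,\ldots,\mathbf e_M\}$, having two absorbing states $-\infty$ and $\mathbf e_M$. Let $\mathbf P_Z$ be the substochastic $M\times M$ matrix obtained from $\mathbf P_{Z'}$ by deleting the row and column of $-\infty$. Fix a partial order $\preceq$ on $\mathbb E$ in which $\mathbf e_M$ is the unique maximal element, let $\mathbf C(\mathbf e,\mathbf e')=\mathbf 1(\mathbf e\preceq\mathbf e')$, and define $\mathbf P_X=\mathbf C\,\mathbf P_Z^T\,\mathbf C^{-1}$. Then every row of $\mathbf P_X$ sums to $1$, i.e. $\sum_{\mathbf e_2\in\mathbb E}\mathbf P_X(\mathbf e,\mathbf e_2)=1$ for all $\mathbf e\in\mathbb E$. Moreover, if there exists $\pi:\mathbb E\to\mathbb R$ with $\sum_{\mathbf e\in\mathbb E}\pi(\mathbf e)=1$ and $\lim_{n\to\infty}\mathbf P_X^n(\mathbf e_2,\mathbf e)=\pi(\mathbf e)$ for all $\mathbf e,\mathbf e_2\in\mathbb E$, then for every $\mathbf e'\in\mathbb E$, $$P(\tau_{\mathbf e_M}<\tau_{-\infty}\mid Z'_0=\mathbf e')=\pi(\{\mathbf e'\}^{\downarrow}),$$ where $\tau_{\mathbf e}=\inf\{n\ge0:Z'_n=\mathbf e\}$.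
   Context: $\mathbf C$ is invertible (it is triangular w.r.t. a linear extension with unit diagonal); its inverse is the Möbius function $\mu$ of the order. For $A\subseteq\mathbb E$, $\pi(A)=\sum_{\mathbf e\in A}\pi(\mathbf e)$, and $\{\mathbf e\}^{\downarrow}=\{\mathbf e'\in\mathbb E:\mathbf e'\preceq\mathbf e\}$. The matrix $\mathbf P_X$ may have negative entries; no nonnegativity is assumed. *)

theory Defs
  imports "HOL-Analysis.Analysis"
begin

definition matpow :: "real ^ 'n ^ 'n \<Rightarrow> nat \<Rightarrow> real ^ 'n ^ 'n" where
  "matpow A n = (((**) A) ^^ n) (mat 1)"

definition stochastic :: "('s::finite \<Rightarrow> 's \<Rightarrow> real) \<Rightarrow> bool" where
  "stochastic P \<longleftrightarrow> (\<forall>x y. 0 \<le> P x y) \<and> (\<forall>x. (\<Sum>y\<in>UNIV. P x y) = 1)"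

text \<open>For a Markov chain with transition matrix P,
  first_hit P a b n x = P(tau_a = n and tau_b > n | Z_0 = x),
  where tau_s = inf{n >= 0 : Z_n = s}.\<close>
fun first_hit :: "('s::finite \<Rightarrow> 's \<Rightarrow> real) \<Rightarrow> 's \<Rightarrow> 's \<Rightarrow> nat \<Rightarrow> 's \<Rightarrow> real" where
  "first_hit P a b 0 x = (if x = a then 1 else 0)"
| "first_hit P a b (Suc n) x =
     (if x = a \<or> x = b then 0 else (\<Sum>y\<in>UNIV. P x y * first_hit P a b n y))"

text \<open>hit_before P a b x = P(tau_a < tau_b | Z_0 = x), as the sum over the disjoint
  events {tau_a = n, tau_b > n}.\<close>
definition hit_before :: "('s::finite \<Rightarrow> 's \<Rightarrow> real) \<Rightarrow> 's \<Rightarrow> 's \<Rightarrow> 's \<Rightarrow> real" where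
  "hit_before P a b x = (\<Sum>n. first_hit P a b n x)"

end

theory Submission
  imports Defs
begin

lemma card_induct_order:
  fixes P :: "'e::{finite,order} \<Rightarrow> bool" and e :: 'e
  assumes "\<And>e. (\<And>x. e < x \<Longrightarrow> P x) \<Longrightarrow> P e"
  shows "P e"
proof -
  have "\<forall>e::'e. card {x. e < x} = k \<longrightarrow> P e" for k
  proof (induction k rule: less_induct)
    case (less k)
    show ?case
    proof (intro allI impI)
      fix e :: 'e assume k: "card {x. e < x} = k"
      show "P e"
      proof (rule assms)
        fix x assume ex: "e < x"
        have "{y. x < y} \<subset> {y. e < y}" using ex by (auto intro: less_trans)
        hence "card {y. x < y} < k" using k by (metis finite psubset_card_mono)
        thus "P x" using less by blast
      qed
    qed
  qed
  thus ?thesis by blast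
qed

lemma greatest:
  fixes eM :: "'e::{finite,order}"
  assumes "\<forall>y. (\<forall>x. \<not> y < x) \<longrightarrow> y = eM"
  shows "e \<le> eM"
proof (induction e rule: card_induct_order)
  case (1 e)
  show ?case
  proof (cases "\<forall>x. \<not> e < x")
    case True thus ?thesis using assms by auto
  next
    case False then obtain x where "e < x" by auto
    thus ?thesis using 1 by (meson order.strict_implies_order order.trans)
  qed
qed

lemma C_inj:
  fixes C :: "real ^ ('e::{finite,order}) ^ ('e::{finite,order})"
  assumes C: "C = (\<chi> e e2. if e \<le> e2 then 1 else 0)"
  shows "inj ((*v) C)"
proof -
  have z: "v = 0" if h: "C *v v = 0" for v
  proof -
    have "v $ e = 0" for e
    proof (induction e rule: card_induct_order)
      case (1 e)
      have "0 = (C *v v) $ e" using h by simp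
      also have "\<dots> = (\<Sum>e2\<in>UNIV. (if e \<le> e2 then v $ e2 else 0))"
        by (auto simp: C matrix_vector_mult_def intro!: sum.cong)
      also have "\<dots> = (\<Sum>e2\<in>{e2. e \<le> e2}. v $ e2)"
        by (simp add: sum.If_cases Collect_conv_if)
      also have "{e2. e \<le> e2} = insert e {e2. e < e2}" by auto
      also have "(\<Sum>e2\<in>insert e {e2. e < e2}. v $ e2) = v $ e + (\<Sum>e2\<in>{e2. e < e2}. v $ e2)"
        by (rule sum.insert) auto
      also have "(\<Sum>e2\<in>{e2. e < e2}. v $ e2) = 0" using 1 by simp
      finally show ?case by simp
    qed
    thus ?thesis by (simp add: vec_eq_iff)
  qed
  show ?thesis
    by (metis (no_types, lifting) inj_onI matrix_vector_mult_diff_distrib right_minus_eq z)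
qed

lemma C_inv:
  fixes C :: "real ^ ('e::{finite,order}) ^ ('e::{finite,order})"
  assumes C: "C = (\<chi> e e2. if e \<le> e2 then 1 else 0)"
  shows "C ** matrix_inv C = mat 1 \<and> matrix_inv C ** C = mat 1"
proof -
  have "invertible C" using C_inj[OF C] invertible_left_inverse matrix_left_invertible_injective by blast
  hence "\<exists>A'. C ** A' = mat 1 \<and> A' ** C = mat 1" by (simp add: invertible_def)
  thus ?thesis unfolding matrix_inv_def by (rule someI_ex)
qed

lemma matpow_Suc: "matpow A (Suc n) = A ** matpow A n"
  by (simp add: matpow_def)

lemma matpow_comm: "matpow A n ** A = A ** matpow A n"
  by (induction n) (simp_all add: matpow_Suc matpow_def[of _ 0] matrix_mul_assoc, metis matrix_mul_assoc matpow_def)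

lemma row_absorb:
  fixes P' :: "'s::finite \<Rightarrow> 's \<Rightarrow> real"
  assumes "stochastic P'" "P' a a = 1" "y \<noteq> a"
  shows "P' a y = 0"
proof -
  have nn: "\<forall>x y. 0 \<le> P' x y" and s: "(\<Sum>y\<in>UNIV. P' a y) = 1" using assms(1) by (auto simp: stochastic_def)
  have "(\<Sum>y\<in>UNIV. P' a y) = P' a a + (\<Sum>y\<in>UNIV - {a}. P' a y)"
    by (simp add: sum.remove)
  hence z: "(\<Sum>y\<in>UNIV - {a}. P' a y) = 0" using s assms(2) by simp
  have "\<forall>y\<in>UNIV - {a}. P' a y = 0" using z nn by (subst (asm) sum_nonneg_eq_0_iff) auto
  thus ?thesis using assms(3) by auto
qed

lemma u_step:
  fixes P' :: "'e::finite option \<Rightarrow> 'e option \<Rightarrow> real"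
  shows "(\<Sum>k\<le>Suc n. first_hit P' a b k x) =
     (if x = a then 1 else if x = b then 0 else (\<Sum>y\<in>UNIV. P' x y * (\<Sum>k\<le>n. first_hit P' a b k y)))"
proof -
  have "(\<Sum>k\<le>Suc n. first_hit P' a b k x) = first_hit P' a b 0 x + (\<Sum>k\<le>n. first_hit P' a b (Suc k) x)"
    by (rule sum.atMost_Suc_shift)
  also have "\<dots> = (if x = a then 1 else if x = b then 0 else (\<Sum>k\<le>n. \<Sum>y\<in>UNIV. P' x y * first_hit P' a b k y))"
    by auto
  also have "(\<Sum>k\<le>n. \<Sum>y\<in>UNIV. P' x y * first_hit P' a b k y) = (\<Sum>y\<in>UNIV. P' x y * (\<Sum>k\<le>n. first_hit P' a b k y))"
    by (simp add: sum_distrib_left sum.swap[of _ "{..n}"])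
  finally show ?thesis .
qed

lemma matpow_eMeM:
  fixes PZ :: "real ^ ('e::{finite}) ^ ('e::{finite})"
  assumes "\<And>y. PZ $ eM $ y = (if y = eM then 1 else 0)"
  shows "matpow PZ n $ eM $ eM = 1"
proof (induction n)
  case 0 thus ?case by (simp add: matpow_def mat_def)
next
  case (Suc n)
  have "matpow PZ (Suc n) $ eM $ eM = (\<Sum>k\<in>UNIV. PZ $ eM $ k * matpow PZ n $ k $ eM)"
    by (simp add: matpow_Suc matrix_matrix_mult_def)
  also have "\<dots> = (\<Sum>k\<in>UNIV. if k = eM then matpow PZ n $ k $ eM else 0)" by (rule sum.cong) (auto simp: assms)
  also have "\<dots> = matpow PZ n $ eM $ eM" by simp
  finally show ?case using Suc by simp
qed

lemma partial_hit:
  fixes P' :: "'e::finite option \<Rightarrow> 'e option \<Rightarrow> real"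
  assumes stoch: "stochastic P'" and ab: "P' (Some eM) (Some eM) = 1"
    and PZ: "PZ = (\<chi> e e2. P' (Some e) (Some e2))"
  shows "(\<Sum>k\<le>n. first_hit P' (Some eM) None k (Some e)) = matpow PZ n $ e $ eM"
proof -
  define w where "w n x = (case x of None \<Rightarrow> 0 | Some e \<Rightarrow> matpow PZ n $ e $ eM)" for n x
  have row: "PZ $ eM $ y = (if y = eM then 1 else 0)" for y
    using row_absorb[OF stoch ab, of "Some y"] ab by (auto simp: PZ)
  have "\<forall>x. (\<Sum>k\<le>n. first_hit P' (Some eM) None k x) = w n x"
  proof (induction n)
    case 0 thus ?case by (auto simp: w_def matpow_def mat_def split: option.split)
  next
    case (Suc n)
    show ?case
    proof
      fix x
      show "(\<Sum>k\<le>Suc n. first_hit P' (Some eM) None k x) = w (Suc n) x"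
      proof (cases "x = Some eM \<or> x = None")
        case True thus ?thesis
          using matpow_eMeM[of PZ eM "Suc n", OF row] by (subst u_step) (auto simp: w_def)
      next
        case False
        then obtain e where e: "x = Some e" by auto
        have "(\<Sum>k\<le>Suc n. first_hit P' (Some eM) None k x) = (\<Sum>y\<in>UNIV. P' x y * w n y)"
          using False Suc by (subst u_step) auto
        also have "\<dots> = (\<Sum>y\<in>insert None (range Some). P' x y * w n y)"
          by (simp add: UNIV_option_conv)
        also have "\<dots> = (\<Sum>y\<in>range Some. P' x y * w n y)"
          by (subst sum.insert) (auto simp: w_def)
        also have "\<dots> = (\<Sum>k\<in>UNIV. P' x (Some k) * w n (Some k))"
          by (subst sum.reindex) (auto simp: inj_on_def)
        also have "\<dots> = (\<Sum>k\<in>UNIV. PZ $ e $ k * matpow PZ n $ k $ eM)"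
          by (simp add: e w_def PZ)
        also have "\<dots> = w (Suc n) x"
          by (simp add: e w_def matpow_Suc matrix_matrix_mult_def)
        finally show ?thesis .
      qed
    qed
  qed
  thus ?thesis by (simp add: w_def)
qed

theorem theorem3p1:
  fixes P' :: "'e::{finite,order} option \<Rightarrow> 'e option \<Rightarrow> real"
    and eM :: "'e"
  assumes stoch: "stochastic P'"
    and absorb_neg_inf: "P' None None = 1"
    and absorb_eM: "P' (Some eM) (Some eM) = 1"
    and eM_maximal: "\<forall>x. \<not> eM < x"
    and eM_unique_maximal: "\<forall>y. (\<forall>x. \<not> y < x) \<longrightarrow> y = eM"
  defines "PZ \<equiv> (\<chi> e e2. P' (Some e) (Some e2)) :: real ^ ('e::{finite,order}) ^ ('e::{finite,order})"
    and "C \<equiv> (\<chi> e e2. if e \<le> e2 then 1 else 0) :: real ^ ('e::{finite,order}) ^ ('e::{finite,order})"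
  defines "PX \<equiv> C ** transpose PZ ** matrix_inv C"
  shows "(\<forall>e. (\<Sum>e2\<in>UNIV. PX $ e $ e2) = 1) \<and>
         (\<forall>\<pi> :: ('e::{finite,order}) \<Rightarrow> real.
            (\<Sum>e\<in>UNIV. \<pi> e) = 1 \<longrightarrow>
            (\<forall>e e2. (\<lambda>n. matpow PX n $ e2 $ e) \<longlonglongrightarrow> \<pi> e) \<longrightarrow>
            (\<forall>e'. hit_before P' (Some eM) None (Some e') = (\<Sum>e\<in>{e. e \<le> e'}. \<pi> e)))"
proof -
  define Ci where "Ci = matrix_inv C"
  have inv: "C ** Ci = mat 1" "Ci ** C = mat 1" using C_inv[OF C_def[THEN meta_eq_to_obj_eq]] by (auto simp: Ci_def)
  have ge: "e \<le> eM" for e using greatest[OF eM_unique_maximal] .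
  define one :: "real ^ ('e::{finite,order})" where "one = (\<chi> i. 1)"
  define d :: "real ^ ('e::{finite,order})" where "d = (\<chi> i. if i = eM then 1 else 0)"
  have row: "PZ $ eM $ y = (if y = eM then 1 else 0)" for y
    using row_absorb[OF stoch absorb_eM, of "Some y"] absorb_eM by (auto simp: PZ_def)
  have Cd: "C *v d = one"
  proof -
    have "(C *v d) $ e = 1" for e
    proof -
      have "(C *v d) $ e = (\<Sum>j\<in>UNIV. if j = eM then C $ e $ j else 0)"
        unfolding matrix_vector_mult_def d_def vec_lambda_beta by (rule sum.cong) auto
      also have "\<dots> = 1" using ge[of e] by (simp add: C_def)
      finally show ?thesis .
    qed
    thus ?thesis by (simp add: vec_eq_iff one_def)
  qed
  have Cione: "Ci *v one = d"
    using Cd inv(2) by (metis matrix_vector_mul_assoc matrix_vector_mul_lid)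
  have PZd: "transpose PZ *v d = d"
  proof -
    have "(transpose PZ *v d) $ e = d $ e" for e
    proof -
      have "(transpose PZ *v d) $ e = (\<Sum>j\<in>UNIV. if j = eM then PZ $ j $ e else 0)"
        unfolding matrix_vector_mult_def d_def transpose_def vec_lambda_beta by (rule sum.cong) auto
      also have "\<dots> = d $ e" by (simp add: row d_def)
      finally show ?thesis .
    qed
    thus ?thesis by (simp add: vec_eq_iff)
  qed
  have PXone: "PX *v one = one"
  proof -
    have "PX *v one = C *v (transpose PZ *v (Ci *v one))"
      unfolding PX_def Ci_def by (simp only: matrix_vector_mul_assoc matrix_mul_assoc)
    also have "\<dots> = one" by (simp only: Cione PZd Cd)
    finally show ?thesis .
  qed
  have part1: "\<forall>e. (\<Sum>e2\<in>UNIV. PX $ e $ e2) = 1"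
  proof
    fix e
    have "(PX *v one) $ e = (\<Sum>e2\<in>UNIV. PX $ e $ e2)"
      by (simp add: matrix_vector_mult_def one_def)
    thus "(\<Sum>e2\<in>UNIV. PX $ e $ e2) = 1" using PXone by (simp add: one_def)
  qed
  have pow: "matpow PX n = C ** transpose (matpow PZ n) ** Ci" for n
  proof (induction n)
    case 0 thus ?case by (simp add: matpow_def transpose_mat inv)
  next
    case (Suc n)
    have "matpow PX (Suc n) = (C ** transpose PZ ** Ci) ** (C ** transpose (matpow PZ n) ** Ci)"
      by (simp only: matpow_Suc Suc) (simp add: PX_def Ci_def)
    also have "\<dots> = C ** transpose PZ ** (Ci ** C) ** transpose (matpow PZ n) ** Ci"
      by (simp add: matrix_mul_assoc)
    also have "\<dots> = C ** (transpose PZ ** transpose (matpow PZ n)) ** Ci"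
      by (simp add: inv matrix_mul_assoc)
    also have "transpose PZ ** transpose (matpow PZ n) = transpose (matpow PZ (Suc n))"
      by (metis matrix_transpose_mul matpow_Suc matpow_comm)
    finally show ?case .
  qed
  have pow2: "transpose (matpow PZ n) = Ci ** matpow PX n ** C" for n
  proof -
    have "Ci ** matpow PX n ** C = (Ci ** C) ** transpose (matpow PZ n) ** (Ci ** C)"
      by (simp add: pow matrix_mul_assoc)
    thus ?thesis by (simp add: inv)
  qed
  have sumCi: "(\<Sum>a\<in>UNIV. Ci $ eM $ a) = 1"
  proof -
    have "(Ci *v one) $ eM = (\<Sum>a\<in>UNIV. Ci $ eM $ a)" by (simp add: matrix_vector_mult_def one_def)
    thus ?thesis using Cione by (simp add: d_def)
  qed
  have part2: "hit_before P' (Some eM) None (Some e') = (\<Sum>e\<in>{e. e \<le> e'}. \<pi> e)"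
    if lim: "\<forall>e e2. (\<lambda>n. matpow PX n $ e2 $ e) \<longlonglongrightarrow> \<pi> e" for \<pi> e'
  proof -
    have ent: "matpow PZ n $ e' $ eM = (\<Sum>b\<in>UNIV. (\<Sum>a\<in>UNIV. Ci $ eM $ a * matpow PX n $ a $ b) * C $ b $ e')" for n
    proof -
      have "matpow PZ n $ e' $ eM = transpose (matpow PZ n) $ eM $ e'" by (simp add: transpose_def)
      also have "\<dots> = (\<Sum>b\<in>UNIV. (\<Sum>a\<in>UNIV. Ci $ eM $ a * matpow PX n $ a $ b) * C $ b $ e')"
        by (simp add: pow2 matrix_matrix_mult_def)
      finally show ?thesis .
    qed
    have "(\<lambda>n. matpow PZ n $ e' $ eM) \<longlonglongrightarrow> (\<Sum>b\<in>UNIV. (\<Sum>a\<in>UNIV. Ci $ eM $ a * \<pi> b) * C $ b $ e')"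
      unfolding ent using lim by (intro tendsto_intros) auto
    also have "(\<Sum>b\<in>UNIV. (\<Sum>a\<in>UNIV. Ci $ eM $ a * \<pi> b) * C $ b $ e') = (\<Sum>b\<in>UNIV. \<pi> b * C $ b $ e')"
      by (simp add: sum_distrib_right[symmetric] sumCi)
    also have "\<dots> = (\<Sum>b\<in>UNIV. if b \<le> e' then \<pi> b else 0)"
      by (auto simp: C_def intro!: sum.cong)
    also have "\<dots> = (\<Sum>e\<in>{e. e \<le> e'}. \<pi> e)"
      by (simp add: sum.If_cases Collect_conv_if)
    finally have L: "(\<lambda>n. matpow PZ n $ e' $ eM) \<longlonglongrightarrow> (\<Sum>e\<in>{e. e \<le> e'}. \<pi> e)" .
    have "(\<lambda>n. \<Sum>k<Suc n. first_hit P' (Some eM) None k (Some e')) \<longlonglongrightarrow> (\<Sum>e\<in>{e. e \<le> e'}. \<pi> e)"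
      using L by (simp add: lessThan_Suc_atMost partial_hit[OF stoch absorb_eM PZ_def[THEN meta_eq_to_obj_eq]])
    hence "(\<lambda>n. first_hit P' (Some eM) None n (Some e')) sums (\<Sum>e\<in>{e. e \<le> e'}. \<pi> e)"
      unfolding sums_def by (rule LIMSEQ_imp_Suc)
    thus ?thesis unfolding hit_before_def by (rule sums_unique[symmetric])
  qed
  show ?thesis using part1 part2 by blast
qed

end
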